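(* Let $N_1$ be a lattice, $M_1=\mathrm{Hom}(N_1,\mathbb Z)$, and let $(\sigma,\sigma^0)$ be a stacky fan in $N_{1,\mathbb R}$ whose fan consists of a simplicial cone $\sigma$ with $\dim\sigma=\mathrm{rk}N_1$ and its faces. Then the $(\sigma,\sigma^0)$-free resolution of $\sigma^\vee\cap M_1$ is given by the natural inclusion $$\sigma^\vee\cap M_1\to\{m\in M_1\otimes_{\mathbb Z}\mathbb Q:\langle m,n\rangle\in\mathbb Z_{\ge0}\text{ for all }n\in\sigma^0\}.$$
   Context: A stacky fan $(\Sigma,\Sigma^0)$ in $N_{\mathbb R}$: $\Sigma$ a finite simplicial fan, $\Sigma^0\subset|\Sigma|\cap N$ such that for each cone $\tau$, $\tau\cap\Sigma^0$ is a submonoid of $\tau\cap N$ isomorphic to $\mathbb N^{\dim\tau}$ and every element of $\tau\cap N$ has a positive multiple in it. For a ray $\rho$ with first nonzero lattice point $\zeta_\rho$, the level $n_\rho$ is the integer with $n_\rho\zeta_\rho$ the first nonzero point of $\rho\cap\Sigma^0$. A submonoid $S\subset P$ is close to $P$ if every element of $P$ has a positive multiple in $S$. For $P=\sigma^\vee\cap M_1$ (sharp, simplicially toric, of rank $d$), the minimal free resolution is the injective homomorphism $r:P\to F\cong\mathbb N^d$ with $r(P)$ close to $F$ such that every injective $j:P\to G\cong\mathbb N^d$ with close image factors uniquely as $j=\phi\circ r$. Each irreducible element $e$ of $F$ corresponds to the unique ray $\rho$ of $\sigma$ such that $\langle m,\zeta_\rho\rangle>0$ for $m\in P$ with $r(m)$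 a positive multiple of $e$; write $e_\rho$. The $(\sigma,\sigma^0)$-free resolution of $P$ is $t\circ r:P\to F$, where $t:F\to F$, $e_\rho\mapsto n_\rho e_\rho$. The claim means the displayed target is a free monoid of rank $d$ and the inclusion is isomorphic (under $P$) to $t\circ r$. *)

theory Defs
  imports "HOL-Analysis.Analysis"
begin

text \<open>The lattice N_1 is modelled as the integer points of real^'n (rank = CARD('n));
  M_1 = Hom(N_1,Z) is identified with the same integer points via the dot product,
  and M_1 (x) Q with the vectors having rational coordinates.\<close>

definition lat :: "(real^'n) set" where
  "lat = {x. \<forall>i. x $ i \<in> \<int>}"

text \<open>Cone generated by the vectors u i, i in S.  The simplicial cone sigma is
  cone_gen u UNIV; its faces are exactly the cone_gen u S.\<close>
definition cone_gen :: "('n \<Rightarrow> real^'n) \<Rightarrow> 'n set \<Rightarrow> (real^'n) set" where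
  "cone_gen u S = {(\<Sum>i\<in>S. c i *\<^sub>R u i) | c. \<forall>i\<in>S. c i \<ge> 0}"

definition ray :: "('n \<Rightarrow> real^'n) \<Rightarrow> 'n \<Rightarrow> (real^'n) set" where
  "ray u i = cone_gen u {i}"

definition free_monoid_rank :: "(real^'n) set \<Rightarrow> nat \<Rightarrow> bool" where
  "free_monoid_rank A k \<longleftrightarrow> (\<exists>f :: nat \<Rightarrow> real^'n.
      A = {(\<Sum>i<k. real (c i) *\<^sub>R f i) | c. True} \<and>
      (\<forall>c c'. (\<Sum>i<k. real (c i) *\<^sub>R f i) = (\<Sum>i<k. real (c' i) *\<^sub>R f i)
               \<longrightarrow> (\<forall>i<k. c i = c' i)))"

text \<open>(sigma, sigma^0) is a stacky fan whose fan is sigma and its faces.\<close>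
definition stacky_simplex :: "('n \<Rightarrow> real^'n) \<Rightarrow> (real^'n) set \<Rightarrow> bool" where
  "stacky_simplex u S0 \<longleftrightarrow>
     S0 \<subseteq> cone_gen u UNIV \<inter> lat \<and>
     (\<forall>S. free_monoid_rank (cone_gen u S \<inter> S0) (card S) \<and>
          (\<forall>x\<in>cone_gen u S \<inter> lat. \<exists>k::nat. k > 0 \<and> real k *\<^sub>R x \<in> cone_gen u S \<inter> S0))"

definition prim_ray :: "('n \<Rightarrow> real^'n) \<Rightarrow> 'n \<Rightarrow> real^'n" where
  "prim_ray u i = (THE z. z \<in> lat \<inter> ray u i \<and> z \<noteq> 0 \<and>
      (\<forall>w \<in> lat \<inter> ray u i. w \<noteq> 0 \<longrightarrow> norm z \<le> norm w))"

definition level :: "('n \<Rightarrow> real^'n) \<Rightarrow> (real^'n) set \<Rightarrow> 'n \<Rightarrow> nat" where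
  "level u S0 i = (LEAST k::nat. k > 0 \<and> real k *\<^sub>R prim_ray u i \<in> S0)"

definition dual_monoid :: "('n \<Rightarrow> real^'n) \<Rightarrow> (real^'n) set" where
  "dual_monoid u = {m \<in> lat. \<forall>v \<in> cone_gen u UNIV. m \<bullet> v \<ge> 0}"

text \<open>Free monoids of rank d are modelled by N^d = ('n \<Rightarrow> nat).\<close>
definition mon_hom_on :: "(real^'n) set \<Rightarrow> (real^'n \<Rightarrow> ('n \<Rightarrow> nat)) \<Rightarrow> bool" where
  "mon_hom_on P r \<longleftrightarrow> r 0 = (\<lambda>_. 0) \<and>
     (\<forall>a\<in>P. \<forall>b\<in>P. r (a + b) = (\<lambda>i. r a i + r b i))"

definition nat_hom :: "(('n \<Rightarrow> nat) \<Rightarrow> ('n \<Rightarrow> nat)) \<Rightarrow> bool" where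
  "nat_hom \<phi> \<longleftrightarrow> \<phi> (\<lambda>_. 0) = (\<lambda>_. 0) \<and>
     (\<forall>x y. \<phi> (\<lambda>i. x i + y i) = (\<lambda>i. \<phi> x i + \<phi> y i))"

definition close_image :: "(real^'n) set \<Rightarrow> (real^'n \<Rightarrow> ('n \<Rightarrow> nat)) \<Rightarrow> bool" where
  "close_image P r \<longleftrightarrow> (\<forall>x. \<exists>k::nat. k > 0 \<and> (\<exists>m\<in>P. r m = (\<lambda>i. k * x i)))"

definition minimal_free_resolution :: "(real^'n) set \<Rightarrow> (real^'n \<Rightarrow> ('n \<Rightarrow> nat)) \<Rightarrow> bool" where
  "minimal_free_resolution P r \<longleftrightarrow>
     mon_hom_on P r \<and> inj_on r P \<and> close_image P r \<and>
     (\<forall>j. mon_hom_on P j \<and> inj_on j P \<and> close_image P j \<longrightarrow>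
        (\<exists>!\<phi>. nat_hom \<phi> \<and> (\<forall>m\<in>P. j m = \<phi> (r m))))"

definition unitv :: "'n \<Rightarrow> ('n \<Rightarrow> nat)" where
  "unitv i = (\<lambda>j. if j = i then 1 else 0)"

text \<open>The ray rho (index) corresponding to the irreducible element e_i.\<close>
definition assoc_ray :: "('n \<Rightarrow> real^'n) \<Rightarrow> (real^'n \<Rightarrow> ('n \<Rightarrow> nat)) \<Rightarrow> 'n \<Rightarrow> 'n" where
  "assoc_ray u r i = (THE \<rho>. \<forall>m \<in> dual_monoid u. \<forall>k::nat. k > 0 \<longrightarrow>
       r m = (\<lambda>j. k * unitv i j) \<longrightarrow> m \<bullet> prim_ray u \<rho> > 0)"

definition stacky_resolution ::
  "('n \<Rightarrow> real^'n) \<Rightarrow> (real^'n) set \<Rightarrow> (real^'n \<Rightarrow> ('n \<Rightarrow> nat)) \<Rightarrow> real^'n \<Rightarrow> ('n \<Rightarrow> nat)" where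
  "stacky_resolution u S0 r m = (\<lambda>i. level u S0 (assoc_ray u r i) * r m i)"

definition target :: "(real^'n) set \<Rightarrow> (real^'n) set" where
  "target S0 = {m. (\<forall>i. m $ i \<in> \<rat>) \<and> (\<forall>v\<in>S0. m \<bullet> v \<in> \<nat>)}"

end

theory Submission
  imports Defs
begin


lemma dual_basis:
  fixes b :: "'n::finite \<Rightarrow> real^'n"
  assumes ind: "\<And>c. (\<Sum>i\<in>UNIV. c i *\<^sub>R b i) = 0 \<Longrightarrow> (\<forall>i. c i = 0)"
  shows "\<exists>w. (\<forall>i j. w i \<bullet> b j = (if i = j then 1 else 0)) \<and> (\<forall>x. x = (\<Sum>i\<in>UNIV. (w i \<bullet> x) *\<^sub>R b i))"
proof -
  define B :: "real^'n^'n" where "B = (\<chi> j i. b i $ j)"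
  have Bv: "B *v c = (\<Sum>i\<in>UNIV. (c $ i) *\<^sub>R b i)" for c
    by (simp add: B_def matrix_vector_mult_def vec_eq_iff sum_component mult.commute)
  have "inj ((*v) B)"
  proof (rule injI)
    fix x y assume "B *v x = B *v y"
    then have "B *v (x - y) = 0" by (simp add: matrix_vector_mult_diff_distrib)
    then have "(\<Sum>i\<in>UNIV. ((x - y) $ i) *\<^sub>R b i) = 0" by (simp add: Bv)
    from ind[OF this] show "x = y" by (simp add: vec_eq_iff)
  qed
  then obtain W where W: "W ** B = mat 1" using matrix_left_invertible_injective by blast
  then have W2: "B ** W = mat 1" using matrix_left_right_inverse by blast
  define w where "w i = W $ i" for i
  have "w i \<bullet> b j = (W ** B) $ i $ j" for i j
    by (simp add: w_def inner_vec_def matrix_matrix_mult_def B_def mult.commute)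
  then have 1: "\<forall>i j. w i \<bullet> b j = (if i = j then 1 else 0)" by (simp add: W mat_def)
  have "x = (\<Sum>i\<in>UNIV. (w i \<bullet> x) *\<^sub>R b i)" for x
  proof -
    have "x = B *v (W *v x)" by (simp add: matrix_vector_mul_assoc W2)
    also have "\<dots> = (\<Sum>i\<in>UNIV. ((W *v x) $ i) *\<^sub>R b i)" by (rule Bv)
    also have "\<dots> = (\<Sum>i\<in>UNIV. (w i \<bullet> x) *\<^sub>R b i)"
      by (simp add: w_def matrix_vector_mult_def inner_vec_def)
    finally show ?thesis .
  qed
  with 1 show ?thesis by blast
qed

lemma dual_expand2:
  fixes b w :: "'n::finite \<Rightarrow> real^'n"
  assumes d: "\<And>i j. w i \<bullet> b j = (if i = j then 1 else 0)"
    and e: "\<And>x. x = (\<Sum>i\<in>UNIV. (w i \<bullet> x) *\<^sub>R b i)"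
  shows "x = (\<Sum>i\<in>UNIV. (x \<bullet> b i) *\<^sub>R w i)"
proof -
  define y where "y = (\<Sum>i\<in>UNIV. (x \<bullet> b i) *\<^sub>R w i)"
  have yb: "y \<bullet> b j = x \<bullet> b j" for j
    by (simp add: y_def inner_sum_left d if_distrib cong: if_cong)
  define v where "v = x - y"
  have vb: "v \<bullet> b j = 0" for j by (simp add: v_def inner_diff_left yb)
  have "v \<bullet> v = v \<bullet> (\<Sum>i\<in>UNIV. (w i \<bullet> v) *\<^sub>R b i)" using e[of v] by simp
  also have "\<dots> = 0" by (simp add: inner_sum_right vb)
  finally have "v = 0" by simp
  then show ?thesis by (simp add: v_def y_def)
qed



lemma lat_iff: "x \<in> lat \<longleftrightarrow> (\<forall>i. x $ i \<in> \<int>)" by (simp add: lat_def)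
lemma lat_add: "x \<in> lat \<Longrightarrow> y \<in> lat \<Longrightarrow> x + y \<in> lat" by (simp add: lat_def)
lemma lat_diff: "x \<in> lat \<Longrightarrow> y \<in> lat \<Longrightarrow> x - y \<in> lat" by (simp add: lat_def)
lemma lat_zero: "0 \<in> lat" by (simp add: lat_def)
lemma lat_scale: "x \<in> lat \<Longrightarrow> k \<in> \<int> \<Longrightarrow> k *\<^sub>R x \<in> lat" by (simp add: lat_def)
lemma lat_sum: "(\<And>i. i \<in> F \<Longrightarrow> f i \<in> lat) \<Longrightarrow> sum f F \<in> lat"
  by (induction F rule: infinite_finite_induct) (auto simp: lat_zero lat_add)
lemma lat_inner: "x \<in> lat \<Longrightarrow> y \<in> lat \<Longrightarrow> x \<bullet> y \<in> \<int>"
  by (auto simp: lat_def inner_vec_def intro!: Ints_sum Ints_mult)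

lemma Ints_nonneg_nat: "(x::real) \<in> \<int> \<Longrightarrow> x \<ge> 0 \<Longrightarrow> \<exists>n::nat. x = real n"
proof -
  assume a: "x \<in> \<int>" "x \<ge> 0"
  then obtain k where "x = of_int k" by (auto elim: Ints_cases)
  with a show ?thesis by (intro exI[of _ "nat k"]) simp
qed

lemma line_lattice:
  assumes h: "h \<in> lat" "h \<noteq> 0"
  shows "\<exists>q>0. q *\<^sub>R h \<in> lat \<and> (\<forall>s\<ge>0. s *\<^sub>R h \<in> lat \<longrightarrow> (\<exists>n::nat. s = real n * q))"
proof -
  obtain j where j: "h $ j \<noteq> 0" using h(2) by (metis vec_eq_iff zero_index)
  have hj: "h $ j \<in> \<int>" using h(1) by (simp add: lat_def)
  then obtain A :: nat where A: "\<bar>h $ j\<bar> = real A"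
    using Ints_nonneg_nat[of "\<bar>h $ j\<bar>"] by auto
  have Apos: "A > 0" using A j by auto
  define T where "T = {n::nat. (real n / real A) *\<^sub>R h \<in> lat}"
  have AT: "A \<in> T" using Apos h(1) by (simp add: T_def)
  define N where "N = (LEAST n. n > 0 \<and> n \<in> T)"
  have N: "N > 0 \<and> N \<in> T" unfolding N_def by (rule LeastI[of _ A]) (use Apos AT in auto)
  have Nmin: "n > 0 \<Longrightarrow> n \<in> T \<Longrightarrow> N \<le> n" for n unfolding N_def by (rule Least_le) auto
  have dvd: "N dvd n" if "n \<in> T" for n
  proof -
    have eq: "real (n mod N) / real A = real n / real A - real (n div N) * (real N / real A)"
    proof -
      have "n = n div N * N + n mod N" by simp
      then have "real n = real (n div N) * real N + real (n mod N)"
        by (metis of_nat_add of_nat_mult)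
      then show ?thesis using Apos by (simp add: field_simps)
    qed
    have "(real (n mod N) / real A) *\<^sub>R h = (real n / real A) *\<^sub>R h - real (n div N) *\<^sub>R ((real N / real A) *\<^sub>R h)"
      by (simp add: eq scaleR_diff_left)
    also have "\<dots> \<in> lat" using that N
      by (intro lat_diff lat_scale[OF _ Ints_of_nat]) (auto simp: T_def)
    finally have "n mod N \<in> T" by (simp add: T_def)
    moreover have "n mod N < N" using N by simp
    ultimately have "n mod N = 0" using Nmin by fastforce
    then show ?thesis by auto
  qed
  show ?thesis
  proof (rule exI[of _ "real N / real A"], intro conjI allI impI)
    show "real N / real A > 0" using N Apos by simp
    show "(real N / real A) *\<^sub>R h \<in> lat" using N by (simp add: T_def)
    fix s :: real assume s: "s \<ge> 0" "s *\<^sub>R h \<in> lat"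
    then have "s * h $ j \<in> \<int>" by (simp add: lat_def)
    then have "\<bar>s * h $ j\<bar> \<in> \<int>" by simp
    then obtain n0 :: nat where n0: "\<bar>s * h $ j\<bar> = real n0" using Ints_nonneg_nat by fastforce
    have sn: "s = real n0 / real A" using n0 A s Apos by (simp add: abs_mult field_simps)
    then have "n0 \<in> T" using s by (simp add: T_def)
    then obtain k where "n0 = N * k" using dvd by blast
    then show "\<exists>n::nat. s = real n * (real N / real A)" using sn by (intro exI[of _ k]) simp
  qed
qed



lemma free_monoid_facts:
  assumes "free_monoid_rank A k"
  obtains f :: "nat \<Rightarrow> real^'n" where "A = {(\<Sum>i<k. real (c i) *\<^sub>R f i) | c. True}"
    "\<And>c c'. (\<Sum>i<k. real (c i) *\<^sub>R f i) = (\<Sum>i<k. real (c' i) *\<^sub>R f i) \<Longrightarrow> (\<forall>i<k. c i = c' i)"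
proof -
  obtain f :: "nat \<Rightarrow> real^'n" where f: "A = {(\<Sum>i<k. real (c i) *\<^sub>R f i) | c. True}"
    "\<forall>c c'. (\<Sum>i<k. real (c i) *\<^sub>R f i) = (\<Sum>i<k. real (c' i) *\<^sub>R f i) \<longrightarrow> (\<forall>i<k. c i = c' i)"
    using assms[unfolded free_monoid_rank_def] by (elim exE conjE)
  show ?thesis by (rule that[OF f(1)]) (use f(2) in blast)
qed

lemma free_monoid_zero: "free_monoid_rank A k \<Longrightarrow> 0 \<in> A"
proof -
  assume "free_monoid_rank A k"
  then obtain f where f: "A = {(\<Sum>i<k. real (c i) *\<^sub>R f i) | c. True}" by (rule free_monoid_facts)
  show ?thesis unfolding f by (intro CollectI exI[of _ "\<lambda>_. 0::nat"]) simp
qed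

lemma free_monoid_add:
  assumes "free_monoid_rank A k" "x \<in> A" "y \<in> A" shows "x + y \<in> A"
proof -
  obtain f where f: "A = {(\<Sum>i<k. real (c i) *\<^sub>R f i) | c. True}" using assms(1) by (rule free_monoid_facts) assumption
  obtain c1 c2 where "x = (\<Sum>i<k. real (c1 i) *\<^sub>R f i)" "y = (\<Sum>i<k. real (c2 i) *\<^sub>R f i)"
    using assms(2,3) unfolding f by blast
  then have "x + y = (\<Sum>i<k. real (c1 i + c2 i) *\<^sub>R f i)"
    by (simp add: sum.distrib scaleR_add_left)
  then show ?thesis unfolding f by (intro CollectI exI[of _ "\<lambda>i. c1 i + c2 i"]) simp
qed

lemma closed_nat_scale:
  fixes A :: "'a::real_vector set"
  assumes "0 \<in> A" "\<And>x y. x \<in> A \<Longrightarrow> y \<in> A \<Longrightarrow> x + y \<in> A" "a \<in> A"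
  shows "real n *\<^sub>R a \<in> A"
proof (induction n)
  case (Suc n)
  have "real (Suc n) *\<^sub>R a = a + real n *\<^sub>R a"
    by (simp add: algebra_simps)
  then show ?case using Suc assms(2,3) by simp
qed (use assms(1) in simp)

lemma closed_nat_comb:
  fixes A :: "'a::real_vector set"
  assumes "0 \<in> A" "\<And>x y. x \<in> A \<Longrightarrow> y \<in> A \<Longrightarrow> x + y \<in> A" "\<And>i. i \<in> F \<Longrightarrow> g i \<in> A"
  shows "(\<Sum>i\<in>F. real (c i) *\<^sub>R g i) \<in> A"
  using assms(3)
proof (induction F rule: infinite_finite_induct)
  case (insert x F)
  then have "g x \<in> A" "(\<Sum>i\<in>F. real (c i) *\<^sub>R g i) \<in> A" by auto
  then show ?case using insert(1,2) assms(2) closed_nat_scale[OF assms(1,2)] by simp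
qed (use assms(1) in simp)+

lemma free_monoid_irred:
  assumes fr: "free_monoid_rank A k" and x: "x \<in> A" "x \<noteq> 0"
    and irr: "\<And>a b. a \<in> A \<Longrightarrow> b \<in> A \<Longrightarrow> x = a + b \<Longrightarrow> a = 0 \<or> b = 0"
    and f: "A = {(\<Sum>i<k. real (c i) *\<^sub>R f i) | c. True}"
    and fi: "\<And>c c'. (\<Sum>i<k. real (c i) *\<^sub>R f i) = (\<Sum>i<k. real (c' i) *\<^sub>R f i) \<Longrightarrow> (\<forall>i<k. c i = c' i)"
  shows "\<exists>l<k. x = f l"
proof -
  obtain c where c: "x = (\<Sum>i<k. real (c i) *\<^sub>R f i)" using x unfolding f by blast
  have "\<exists>l<k. c l > 0"
  proof (rule ccontr)
    assume "\<not> ?thesis"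
    then have "x = (\<Sum>i<k. real 0 *\<^sub>R f i)" unfolding c by (intro sum.cong) auto
    then show False using x by simp
  qed
  then obtain l where l: "l < k" "c l > 0" by blast
  define e where "e = (\<lambda>i::nat. if i = l then 1 else (0::nat))"
  define c' where "c' = c(l := c l - 1)"
  have fl: "(\<Sum>i<k. real (e i) *\<^sub>R f i) = f l" proof -
    have "(\<Sum>i<k. real (e i) *\<^sub>R f i) = (\<Sum>i<k. if i = l then f i else 0)"
      by (intro sum.cong) (auto simp: e_def)
    also have "\<dots> = f l" using l by (simp add: sum.delta')
    finally show ?thesis .
  qed
  have split: "x = (\<Sum>i<k. real (e i) *\<^sub>R f i) + (\<Sum>i<k. real (c' i) *\<^sub>R f i)"
    unfolding c sum.distrib[symmetric] scaleR_add_left[symmetric] of_nat_add[symmetric]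
    by (intro sum.cong) (use l in \<open>auto simp: e_def c'_def\<close>)
  have "(\<Sum>i<k. real (e i) *\<^sub>R f i) \<noteq> 0"
  proof
    assume "(\<Sum>i<k. real (e i) *\<^sub>R f i) = 0"
    also have "0 = (\<Sum>i<k. real ((\<lambda>_. 0::nat) i) *\<^sub>R f i)" by simp
    finally have "\<forall>i<k. e i = (\<lambda>_. 0::nat) i" by (rule fi)
    then have "e l = 0" using l by simp
    then show False by (simp add: e_def)
  qed
  moreover have "(\<Sum>i<k. real (e i) *\<^sub>R f i) \<in> A" "(\<Sum>i<k. real (c' i) *\<^sub>R f i) \<in> A"
    unfolding f by auto
  ultimately have "(\<Sum>i<k. real (c' i) *\<^sub>R f i) = 0" using irr[OF _ _ split] by blast
  then have "x = f l" using split fl by simp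
  with l show ?thesis by blast
qed




locale ctx =
  fixes u :: "'n::finite \<Rightarrow> real^'n" and S0 :: "(real^'n) set"
    and r :: "real^'n \<Rightarrow> ('n \<Rightarrow> nat)"
  assumes inj_u: "inj u" and ind_u: "independent (range u)"
    and st: "stacky_simplex u S0"
    and mfr: "minimal_free_resolution (dual_monoid u) r"
begin

lemma u_ind: assumes "(\<Sum>i\<in>UNIV. c i *\<^sub>R u i) = 0" shows "c i = 0"
proof -
  define c' where "c' v = c (inv u v)" for v
  have "(\<Sum>v\<in>range u. c' v *\<^sub>R v) = (\<Sum>i\<in>UNIV. c' (u i) *\<^sub>R u i)"
    by (simp add: sum.reindex[OF inj_u])
  also have "\<dots> = 0" using assms inj_u by (simp add: c'_def)
  finally have "\<forall>v\<in>range u. c' v = 0"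
    using ind_u real_vector.dependent_finite[of "range u"] by auto
  then show ?thesis using inj_u by (simp add: c'_def)
qed

lemma ray_eq: "ray u i = {t *\<^sub>R u i | t. t \<ge> 0}"
  unfolding ray_def cone_gen_def by auto

lemma S0_sub: "S0 \<subseteq> cone_gen u UNIV" "S0 \<subseteq> lat"
  using st unfolding stacky_simplex_def by auto

lemma h_ex: "\<exists>h t. h \<in> S0 \<and> t > 0 \<and> h = t *\<^sub>R u i \<and> ray u i \<inter> S0 = {real n *\<^sub>R h | n. True}"
proof -
  have "free_monoid_rank (cone_gen u {i} \<inter> S0) (card {i})"
    using st unfolding stacky_simplex_def by blast
  then have "free_monoid_rank (ray u i \<inter> S0) 1" by (simp add: ray_def)
  then obtain f :: "nat \<Rightarrow> real^'n" where f: "ray u i \<inter> S0 = {(\<Sum>k<1. real (c k) *\<^sub>R f k) | c. True}"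
    and fi': "\<forall>c c'. (\<Sum>k<1. real (c k) *\<^sub>R f k) = (\<Sum>k<1. real (c' k) *\<^sub>R f k) \<longrightarrow> (\<forall>k<1. c k = c' k)"
    unfolding free_monoid_rank_def by (elim exE conjE)
  have fi: "\<And>c c'. (\<Sum>k<1. real (c k) *\<^sub>R f k) = (\<Sum>k<1. real (c' k) *\<^sub>R f k) \<Longrightarrow> (\<forall>k<1. c k = c' k)"
    using fi' by blast
  have s1: "(\<Sum>k<1. real (c k) *\<^sub>R f k) = real (c 0) *\<^sub>R f 0" for c :: "nat \<Rightarrow> nat" by simp
  have eq: "ray u i \<inter> S0 = {real n *\<^sub>R f 0 | n. True}"
  proof (intro set_eqI iffI)
    fix x assume "x \<in> ray u i \<inter> S0"
    then obtain c where "x = (\<Sum>k<1. real (c k) *\<^sub>R f k)" unfolding f by auto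
    then have "x = real (c 0) *\<^sub>R f 0" by (simp only: s1)
    then show "x \<in> {real n *\<^sub>R f 0 | n. True}" by blast
  next
    fix x assume "x \<in> {real n *\<^sub>R f 0 | n. True}"
    then obtain n where "x = real n *\<^sub>R f 0" by blast
    then have "x = (\<Sum>k<1. real ((\<lambda>_. n) k) *\<^sub>R f k)" by (simp only: s1)
    then show "x \<in> ray u i \<inter> S0" unfolding f by auto
  qed
  have f0: "f 0 \<noteq> 0"
  proof
    assume "f 0 = 0"
    then have "(\<Sum>k<1. real ((\<lambda>_. 0::nat) k) *\<^sub>R f k) = (\<Sum>k<1. real ((\<lambda>_. 1::nat) k) *\<^sub>R f k)"
      by (simp only: s1) simp
    from fi[OF this] have "(\<lambda>_. 0::nat) 0 = (\<lambda>_. 1::nat) 0" by blast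
    then show False by simp
  qed
  have "f 0 \<in> ray u i \<inter> S0" unfolding eq by (intro CollectI exI[of _ "1::nat"]) simp
  then obtain t where t: "t \<ge> 0" "f 0 = t *\<^sub>R u i" "f 0 \<in> S0" unfolding ray_eq by blast
  with f0 have "t > 0" by (cases "t = 0") auto
  with t eq show ?thesis by blast
qed

definition hh where "hh i = (SOME h. \<exists>t. h \<in> S0 \<and> t > 0 \<and> h = t *\<^sub>R u i \<and> ray u i \<inter> S0 = {real n *\<^sub>R h | n. True})"
definition tt where "tt i = (SOME t. t > 0 \<and> hh i = t *\<^sub>R u i)"

lemma hh_props: "hh i \<in> S0" "ray u i \<inter> S0 = {real n *\<^sub>R hh i | n. True}" "tt i > 0" "hh i = tt i *\<^sub>R u i"
proof -
  have 1: "\<exists>t. hh i \<in> S0 \<and> t > 0 \<and> hh i = t *\<^sub>R u i \<and> ray u i \<inter> S0 = {real n *\<^sub>R hh i | n. True}"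
    unfolding hh_def by (rule someI_ex) (rule h_ex)
  then show "hh i \<in> S0" "ray u i \<inter> S0 = {real n *\<^sub>R hh i | n. True}" by auto
  have "tt i > 0 \<and> hh i = tt i *\<^sub>R u i" unfolding tt_def by (rule someI_ex) (use 1 in blast)
  then show "tt i > 0" "hh i = tt i *\<^sub>R u i" by auto
qed

lemma hh_lat: "hh i \<in> lat" using hh_props(1) S0_sub by blast

lemma u_hh: "u i = (1 / tt i) *\<^sub>R hh i" using hh_props(3,4)[of i] by simp

lemma hh_ind: assumes "(\<Sum>i\<in>UNIV. c i *\<^sub>R hh i) = 0" shows "c i = 0"
proof -
  have "(\<Sum>i\<in>UNIV. (c i * tt i) *\<^sub>R u i) = 0" using assms by (simp add: hh_props(4))
  then have "c i * tt i = 0" by (rule u_ind)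
  then show ?thesis using hh_props(3)[of i] by simp
qed

definition ww where "ww = (SOME w. (\<forall>i j. w i \<bullet> hh j = (if i = j then 1 else 0)) \<and> (\<forall>x. x = (\<Sum>i\<in>UNIV. (w i \<bullet> x) *\<^sub>R hh i)))"

lemma ww_props: "\<And>i j. ww i \<bullet> hh j = (if i = j then 1 else 0)" "\<And>x. x = (\<Sum>i\<in>UNIV. (ww i \<bullet> x) *\<^sub>R hh i)"
proof -
  have ex: "\<exists>w. (\<forall>i j. w i \<bullet> hh j = (if i = j then 1 else 0)) \<and> (\<forall>x. x = (\<Sum>i\<in>UNIV. (w i \<bullet> x) *\<^sub>R hh i))"
    by (rule dual_basis) (use hh_ind in blast)
  have "(\<forall>i j. ww i \<bullet> hh j = (if i = j then 1 else 0)) \<and> (\<forall>x. x = (\<Sum>i\<in>UNIV. (ww i \<bullet> x) *\<^sub>R hh i))"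
    unfolding ww_def by (rule someI_ex[OF ex])
  then show "\<And>i j. ww i \<bullet> hh j = (if i = j then 1 else 0)" "\<And>x. x = (\<Sum>i\<in>UNIV. (ww i \<bullet> x) *\<^sub>R hh i)" by auto
qed

lemma wh: "ww i \<bullet> hh j = (if i = j then 1 else 0)" by (rule ww_props(1))
lemma expand1: "x = (\<Sum>i\<in>UNIV. (ww i \<bullet> x) *\<^sub>R hh i)" by (rule ww_props(2))
lemma expand2: "x = (\<Sum>i\<in>UNIV. (x \<bullet> hh i) *\<^sub>R ww i)"
  by (rule dual_expand2) (rule wh, rule expand1)

lemma coef: "ww j \<bullet> (\<Sum>i\<in>UNIV. c i *\<^sub>R hh i) = c j"
  by (simp add: inner_sum_right wh if_distrib cong: if_cong)

lemma coef2: "(\<Sum>i\<in>UNIV. c i *\<^sub>R ww i) \<bullet> hh j = c j"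
  by (simp add: inner_sum_left wh if_distrib cong: if_cong)

lemma sigma_iff: "v \<in> cone_gen u UNIV \<longleftrightarrow> (\<forall>j. ww j \<bullet> v \<ge> 0)"
proof
  assume "v \<in> cone_gen u UNIV"
  then obtain c where c: "v = (\<Sum>i\<in>UNIV. c i *\<^sub>R u i)" "\<forall>i. c i \<ge> 0" unfolding cone_gen_def by auto
  have "v = (\<Sum>i\<in>UNIV. (c i / tt i) *\<^sub>R hh i)" unfolding c(1) by (simp add: u_hh)
  then have "ww j \<bullet> v = c j / tt j" for j using coef by simp
  then show "\<forall>j. ww j \<bullet> v \<ge> 0" using c(2) hh_props(3) by (auto intro: divide_nonneg_pos)
next
  assume a: "\<forall>j. ww j \<bullet> v \<ge> 0"
  have "v = (\<Sum>i\<in>UNIV. ((ww i \<bullet> v) * tt i) *\<^sub>R u i)"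
    by (subst expand1) (simp add: hh_props(4))
  moreover have "\<forall>i. (ww i \<bullet> v) * tt i \<ge> 0" using a hh_props(3) by (simp add: less_imp_le)
  ultimately show "v \<in> cone_gen u UNIV" unfolding cone_gen_def
    by (intro CollectI exI[of _ "\<lambda>i. (ww i \<bullet> v) * tt i"]) auto
qed

end


context ctx begin

lemma S0_free: "free_monoid_rank S0 CARD('n)"
proof -
  have "free_monoid_rank (cone_gen u UNIV \<inter> S0) (card (UNIV::'n set))"
    using st unfolding stacky_simplex_def by blast
  moreover have "cone_gen u UNIV \<inter> S0 = S0" using S0_sub by blast
  ultimately show ?thesis by simp
qed

lemma S0_zero: "0 \<in> S0" by (rule free_monoid_zero[OF S0_free])
lemma S0_add: "x \<in> S0 \<Longrightarrow> y \<in> S0 \<Longrightarrow> x + y \<in> S0" by (rule free_monoid_add[OF S0_free])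

lemma hh_nonzero: "hh i \<noteq> 0" using wh[of i i] by auto
lemma hh_inj: "hh i = hh j \<Longrightarrow> i = j" using wh[of i i] wh[of i j] by (auto split: if_splits)

lemma S0_cone: "x \<in> S0 \<Longrightarrow> ww j \<bullet> x \<ge> 0" using S0_sub sigma_iff by blast

lemma single_coord: assumes "\<forall>j. j \<noteq> i \<longrightarrow> ww j \<bullet> x = 0" shows "x = (ww i \<bullet> x) *\<^sub>R hh i"
proof -
  have "x = (\<Sum>j\<in>UNIV. (ww j \<bullet> x) *\<^sub>R hh j)" by (rule expand1)
  also have "\<dots> = (\<Sum>j\<in>UNIV. if j = i then (ww i \<bullet> x) *\<^sub>R hh i else 0)"
    by (intro sum.cong) (use assms in auto)
  also have "\<dots> = (ww i \<bullet> x) *\<^sub>R hh i" by simp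
  finally show ?thesis .
qed

lemma ray_hh: "ray u i = {t *\<^sub>R hh i | t. t \<ge> 0}"
proof -
  have "ray u i = {t *\<^sub>R u i | t. t \<ge> 0}" by (rule ray_eq)
  also have "\<dots> = {t *\<^sub>R hh i | t. t \<ge> 0}"
  proof (intro set_eqI iffI)
    fix x assume "x \<in> {t *\<^sub>R u i | t. t \<ge> 0}"
    then obtain t where "x = t *\<^sub>R u i" "t \<ge> 0" by auto
    then have "x = (t / tt i) *\<^sub>R hh i" "t / tt i \<ge> 0" using hh_props(3)[of i] by (auto simp: u_hh)
    then show "x \<in> {t *\<^sub>R hh i | t. t \<ge> 0}" by blast
  next
    fix x assume "x \<in> {t *\<^sub>R hh i | t. t \<ge> 0}"
    then obtain t where "x = t *\<^sub>R hh i" "t \<ge> 0" by auto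
    then have "x = (t * tt i) *\<^sub>R u i" "t * tt i \<ge> 0" using hh_props(3)[of i] by (auto simp: hh_props(4))
    then show "x \<in> {t *\<^sub>R u i | t. t \<ge> 0}" by blast
  qed
  finally show ?thesis .
qed

lemma in_ray_S0: assumes "x \<in> S0" "\<forall>j. j \<noteq> i \<longrightarrow> ww j \<bullet> x = 0" shows "\<exists>n::nat. x = real n *\<^sub>R hh i"
proof -
  have "x = (ww i \<bullet> x) *\<^sub>R hh i" by (rule single_coord) (rule assms(2))
  moreover have "ww i \<bullet> x \<ge> 0" using S0_cone assms(1) by blast
  ultimately have "x \<in> ray u i" unfolding ray_hh by blast
  with assms(1) have "x \<in> {real n *\<^sub>R hh i | n. True}" using hh_props(2) by blast
  then show ?thesis by auto
qed

lemma hh_irred: assumes "a \<in> S0" "b \<in> S0" "hh i = a + b" shows "a = 0 \<or> b = 0"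
proof -
  have z: "ww j \<bullet> a = 0 \<and> ww j \<bullet> b = 0" if "j \<noteq> i" for j
  proof -
    have "ww j \<bullet> a + ww j \<bullet> b = 0" using wh[of j i] that assms(3) by (simp add: inner_add_right)
    moreover have "ww j \<bullet> a \<ge> 0" "ww j \<bullet> b \<ge> 0" using S0_cone assms by auto
    ultimately show ?thesis by linarith
  qed
  obtain n where n: "a = real n *\<^sub>R hh i" using in_ray_S0[OF assms(1)] z by blast
  obtain m where m: "b = real m *\<^sub>R hh i" using in_ray_S0[OF assms(2)] z by blast
  have "(real n + real m - 1) *\<^sub>R hh i = 0" using assms(3) n m by (simp add: algebra_simps)
  then have "real n + real m = 1" using hh_nonzero[of i] by simp
  then have "n = 0 \<or> m = 0" by linarith
  then show ?thesis using n m by auto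
qed

lemma S0_eq: "x \<in> S0 \<longleftrightarrow> (\<exists>c. x = (\<Sum>i\<in>UNIV. real (c i) *\<^sub>R hh i))"
proof
  assume "\<exists>c. x = (\<Sum>i\<in>UNIV. real (c i) *\<^sub>R hh i)"
  then obtain c where "x = (\<Sum>i\<in>UNIV. real (c i) *\<^sub>R hh i)" by blast
  then show "x \<in> S0" using closed_nat_comb[OF S0_zero S0_add, of UNIV hh c] hh_props(1) by blast
next
  assume x: "x \<in> S0"
  let ?d = "CARD('n)"
  obtain f :: "nat \<Rightarrow> real^'n" where f: "S0 = {(\<Sum>k<?d. real (c k) *\<^sub>R f k) | c. True}"
    and fi': "\<forall>c c'. (\<Sum>k<?d. real (c k) *\<^sub>R f k) = (\<Sum>k<?d. real (c' k) *\<^sub>R f k) \<longrightarrow> (\<forall>k<?d. c k = c' k)"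
    using S0_free unfolding free_monoid_rank_def by (elim exE conjE)
  have fi: "\<And>c c'. (\<Sum>k<?d. real (c k) *\<^sub>R f k) = (\<Sum>k<?d. real (c' k) *\<^sub>R f k) \<Longrightarrow> (\<forall>k<?d. c k = c' k)"
    using fi' by blast
  have "\<exists>l<?d. hh i = f l" for i
    by (rule free_monoid_irred[OF S0_free hh_props(1) hh_nonzero _ f fi]) (rule hh_irred)
  then have "\<forall>i. \<exists>l. l < ?d \<and> hh i = f l" by blast
  then obtain p where p: "\<And>i. p i < ?d \<and> hh i = f (p i)" by metis
  have injp: "inj p" by (rule injI) (metis p hh_inj)
  have sub: "p ` UNIV \<subseteq> {..<?d}" using p by auto
  have "card (p ` UNIV) = ?d" using injp by (simp add: card_image)
  then have "p ` UNIV = {..<?d}" using sub by (intro card_subset_eq) auto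
  then have bij: "bij_betw p UNIV {..<?d}" using injp by (simp add: bij_betw_def)
  obtain c where c: "x = (\<Sum>k<?d. real (c k) *\<^sub>R f k)" using x unfolding f by auto
  also have "\<dots> = (\<Sum>i\<in>UNIV. real (c (p i)) *\<^sub>R f (p i))"
    by (rule sum.reindex_bij_betw[OF bij, symmetric])
  also have "\<dots> = (\<Sum>i\<in>UNIV. real (c (p i)) *\<^sub>R hh i)" using p by simp
  finally show "\<exists>c. x = (\<Sum>i\<in>UNIV. real (c i) *\<^sub>R hh i)" by (intro exI[of _ "c \<circ> p"]) simp
qed

abbreviation "PP \<equiv> dual_monoid u"

lemma P_iff: "m \<in> PP \<longleftrightarrow> m \<in> lat \<and> (\<forall>j. m \<bullet> hh j \<ge> 0)"
proof
  assume "m \<in> PP"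
  then show "m \<in> lat \<and> (\<forall>j. m \<bullet> hh j \<ge> 0)" unfolding dual_monoid_def
    using hh_props(1) S0_sub by blast
next
  assume a: "m \<in> lat \<and> (\<forall>j. m \<bullet> hh j \<ge> 0)"
  have "m \<bullet> v \<ge> 0" if "v \<in> cone_gen u UNIV" for v
  proof -
    have "m \<bullet> v = (\<Sum>i\<in>UNIV. (ww i \<bullet> v) * (m \<bullet> hh i))"
      by (subst expand1[of v]) (simp add: inner_sum_right)
    also have "\<dots> \<ge> 0" using a that sigma_iff by (intro sum_nonneg mult_nonneg_nonneg) auto
    finally show ?thesis .
  qed
  then show "m \<in> PP" using a unfolding dual_monoid_def by blast
qed

lemma P_nat: "m \<in> PP \<Longrightarrow> \<exists>n::nat. m \<bullet> hh j = real n"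
  using P_iff lat_inner hh_lat Ints_nonneg_nat by blast

lemma P_add: "m \<in> PP \<Longrightarrow> m' \<in> PP \<Longrightarrow> m + m' \<in> PP"
  by (auto simp: P_iff lat_add inner_add_left)

lemma P_zero: "0 \<in> PP" by (auto simp: P_iff lat_zero)

lemma sum_hh_coef: "ww j \<bullet> (\<Sum>i\<in>UNIV. hh i) = 1"
  using coef[of j "\<lambda>_. 1"] by simp

lemma lat_coef: assumes x: "x \<in> lat" shows "\<exists>k::nat. k > 0 \<and> (\<forall>j. real k * (ww j \<bullet> x) \<in> \<int>)"
proof -
  define K :: nat where "K = nat \<lceil>\<Sum>j\<in>UNIV. \<bar>ww j \<bullet> x\<bar>\<rceil>"
  have Kge: "real K \<ge> \<bar>ww j \<bullet> x\<bar>" for j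
  proof -
    have "\<bar>ww j \<bullet> x\<bar> \<le> (\<Sum>j\<in>UNIV. \<bar>ww j \<bullet> x\<bar>)" by (rule member_le_sum) auto
    also have "\<dots> \<le> real K" unfolding K_def by linarith
    finally show ?thesis .
  qed
  define y where "y = x + real K *\<^sub>R (\<Sum>i\<in>UNIV. hh i)"
  have wy: "ww j \<bullet> y = ww j \<bullet> x + real K" for j
    by (simp add: y_def inner_add_right sum_hh_coef)
  have ylat: "y \<in> lat" unfolding y_def
    by (intro lat_add x lat_scale lat_sum hh_lat) auto
  have "y \<in> cone_gen u UNIV" unfolding sigma_iff wy using Kge by (smt (verit))
  then obtain k :: nat where k: "k > 0" "real k *\<^sub>R y \<in> cone_gen u UNIV \<inter> S0"
    using st ylat unfolding stacky_simplex_def by blast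
  then obtain c where c: "real k *\<^sub>R y = (\<Sum>i\<in>UNIV. real (c i) *\<^sub>R hh i)" using S0_eq by blast
  have "real k * (ww j \<bullet> x) \<in> \<int>" for j
  proof -
    have "real (c j) = ww j \<bullet> (real k *\<^sub>R y)" using c coef by simp
    also have "\<dots> = real k * (ww j \<bullet> x) + real k * real K" by (simp add: wy algebra_simps)
    finally have "real k * (ww j \<bullet> x) = real (c j) - real (k * K)" by simp
    then show ?thesis by simp
  qed
  with k show ?thesis by blast
qed

lemma axis_lat: "axis j (1::real) \<in> lat" by (simp add: lat_def axis_def)

definition kk where "kk j = (SOME k::nat. k > 0 \<and> (\<forall>i. real k * (ww i \<bullet> axis j 1) \<in> \<int>))"
definition DD where "DD = (\<Prod>j\<in>UNIV. kk j)"

lemma kk_props: "kk j > 0" "real (kk j) * (ww i \<bullet> axis j 1) \<in> \<int>"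
proof -
  have "kk j > 0 \<and> (\<forall>i. real (kk j) * (ww i \<bullet> axis j 1) \<in> \<int>)"
    unfolding kk_def by (rule someI_ex[OF lat_coef[OF axis_lat]])
  then show "kk j > 0" "real (kk j) * (ww i \<bullet> axis j 1) \<in> \<int>" by auto
qed

lemma DD_pos: "DD > 0" unfolding DD_def using kk_props(1) by (simp add: prod_pos)

lemma DD_ww: "real DD * (ww i $ j) \<in> \<int>"
proof -
  have "DD = kk j * (\<Prod>j\<in>UNIV - {j}. kk j)" unfolding DD_def by (simp add: prod.remove)
  then have "real DD * (ww i $ j) = real (\<Prod>j\<in>UNIV - {j}. kk j) * (real (kk j) * (ww i \<bullet> axis j 1))"
    by (simp add: inner_axis)
  also have "\<dots> \<in> \<int>" by (intro Ints_mult Ints_of_nat kk_props(2))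
  finally show ?thesis .
qed

lemma ww_rat: "ww i $ j \<in> \<rat>"
proof -
  obtain z where z: "real DD * (ww i $ j) = of_int z" using DD_ww[of i j] Ints_cases by metis
  then have "ww i $ j = of_int z / real DD" using DD_pos by (simp add: field_simps)
  then show ?thesis by simp
qed

definition pp where "pp i = real DD *\<^sub>R ww i"

lemma pp_lat: "pp i \<in> lat" unfolding pp_def lat_def using DD_ww by simp

lemma pp_hh: "pp i \<bullet> hh j = (if i = j then real DD else 0)" by (simp add: pp_def wh)

lemma pp_P: "pp i \<in> PP" unfolding P_iff using pp_lat pp_hh by simp

lemma P_expand: "real DD *\<^sub>R m = (\<Sum>i\<in>UNIV. (m \<bullet> hh i) *\<^sub>R pp i)"
proof -
  have "real DD *\<^sub>R m = real DD *\<^sub>R (\<Sum>i\<in>UNIV. (m \<bullet> hh i) *\<^sub>R ww i)" by (subst expand2[of m]) simp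
  also have "\<dots> = (\<Sum>i\<in>UNIV. (m \<bullet> hh i) *\<^sub>R pp i)" by (simp add: scaleR_sum_right pp_def mult.commute)
  finally show ?thesis .
qed

end


context ctx begin

definition qq where "qq i = (SOME q. q > 0 \<and> q *\<^sub>R hh i \<in> lat \<and> (\<forall>s\<ge>0. s *\<^sub>R hh i \<in> lat \<longrightarrow> (\<exists>n::nat. s = real n * q)))"

lemma qq_props: "qq i > 0" "qq i *\<^sub>R hh i \<in> lat" "s \<ge> 0 \<Longrightarrow> s *\<^sub>R hh i \<in> lat \<Longrightarrow> \<exists>n::nat. s = real n * qq i"
proof -
  have "qq i > 0 \<and> qq i *\<^sub>R hh i \<in> lat \<and> (\<forall>s\<ge>0. s *\<^sub>R hh i \<in> lat \<longrightarrow> (\<exists>n::nat. s = real n * qq i))"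
    unfolding qq_def by (rule someI_ex[OF line_lattice[OF hh_lat hh_nonzero]])
  then show "qq i > 0" "qq i *\<^sub>R hh i \<in> lat" "s \<ge> 0 \<Longrightarrow> s *\<^sub>R hh i \<in> lat \<Longrightarrow> \<exists>n::nat. s = real n * qq i"
    by auto
qed

definition zz where "zz i = qq i *\<^sub>R hh i"

lemma zz_lat: "zz i \<in> lat" using qq_props(2) by (simp add: zz_def)
lemma zz_nonzero: "zz i \<noteq> 0" using qq_props(1)[of i] hh_nonzero[of i] by (simp add: zz_def)

lemma lat_ray: "w \<in> lat \<inter> ray u i \<longleftrightarrow> (\<exists>n::nat. w = real n *\<^sub>R zz i)"
proof
  assume "w \<in> lat \<inter> ray u i"
  then obtain t where t: "t \<ge> 0" "w = t *\<^sub>R hh i" "w \<in> lat" unfolding ray_hh by blast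
  then obtain n :: nat where "t = real n * qq i" using qq_props(3) by blast
  then show "\<exists>n::nat. w = real n *\<^sub>R zz i" using t by (auto simp: zz_def)
next
  assume "\<exists>n::nat. w = real n *\<^sub>R zz i"
  then obtain n :: nat where n: "w = real n *\<^sub>R zz i" by blast
  have "w \<in> lat" unfolding n by (rule lat_scale[OF zz_lat]) simp
  moreover have "w = (real n * qq i) *\<^sub>R hh i" "real n * qq i \<ge> 0" using n qq_props(1)[of i]
    by (auto simp: zz_def)
  ultimately show "w \<in> lat \<inter> ray u i" unfolding ray_hh by blast
qed

lemma prim_eq: "prim_ray u i = zz i"
  unfolding prim_ray_def
proof (rule the_equality)
  show "zz i \<in> lat \<inter> ray u i \<and> zz i \<noteq> 0 \<and> (\<forall>w\<in>lat \<inter> ray u i. w \<noteq> 0 \<longrightarrow> norm (zz i) \<le> norm w)"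
  proof (intro conjI ballI impI)
    show "zz i \<in> lat \<inter> ray u i" unfolding lat_ray by (intro exI[of _ 1]) simp
    show "zz i \<noteq> 0" by (rule zz_nonzero)
    fix w assume w: "w \<in> lat \<inter> ray u i" "w \<noteq> 0"
    then obtain n :: nat where n: "w = real n *\<^sub>R zz i" unfolding lat_ray by blast
    with w have "n \<ge> 1" by (cases n) auto
    then have "norm (zz i) \<le> real n * norm (zz i)" by (simp add: mult_le_cancel_right1)
    then show "norm (zz i) \<le> norm w" using n by simp
  qed
next
  fix z assume z: "z \<in> lat \<inter> ray u i \<and> z \<noteq> 0 \<and> (\<forall>w\<in>lat \<inter> ray u i. w \<noteq> 0 \<longrightarrow> norm z \<le> norm w)"
  then obtain n :: nat where n: "z = real n *\<^sub>R zz i" unfolding lat_ray by blast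
  have "zz i \<in> lat \<inter> ray u i" unfolding lat_ray by (intro exI[of _ 1]) simp
  then have "norm z \<le> norm (zz i)" using z zz_nonzero by blast
  then have "real n * norm (zz i) \<le> 1 * norm (zz i)" using n by simp
  then have "real n \<le> 1" using zz_nonzero[of i] by (simp add: mult_le_cancel_right)
  moreover have "n \<noteq> 0" using z n by auto
  ultimately have "n = 1" by linarith
  then show "z = zz i" using n by simp
qed

lemma hh_zz_ex: "\<exists>c::nat. c > 0 \<and> hh i = real c *\<^sub>R zz i"
proof -
  have "hh i \<in> lat \<inter> ray u i" using hh_lat unfolding ray_hh by (auto intro: exI[of _ 1])
  then obtain c :: nat where c: "hh i = real c *\<^sub>R zz i" unfolding lat_ray by blast
  then have "c > 0" using hh_nonzero[of i] by (cases c) auto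
  with c show ?thesis by blast
qed

lemma level_eq: "hh i = real (level u S0 i) *\<^sub>R zz i" "level u S0 i > 0"
proof -
  obtain c :: nat where c: "c > 0" "hh i = real c *\<^sub>R zz i" using hh_zz_ex by blast
  have "level u S0 i = c" unfolding level_def prim_eq
  proof (rule Least_equality)
    show "c > 0 \<and> real c *\<^sub>R zz i \<in> S0" using c hh_props(1)[of i] by simp
    fix k assume k: "k > 0 \<and> real k *\<^sub>R zz i \<in> S0"
    have "real k *\<^sub>R zz i \<in> lat \<inter> ray u i" unfolding lat_ray by blast
    with k have "real k *\<^sub>R zz i \<in> ray u i \<inter> S0" by blast
    then obtain n :: nat where "real k *\<^sub>R zz i = real n *\<^sub>R hh i" unfolding hh_props(2) by blast
    also have "\<dots> = real (n * c) *\<^sub>R zz i" using c by simp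
    finally have "real k = real (n * c)" using zz_nonzero[of i] by (simp add: scaleR_cancel_right)
    then have "k = n * c" by (simp only: of_nat_eq_iff)
    with k show "c \<le> k" by (cases n) auto
  qed
  with c show "hh i = real (level u S0 i) *\<^sub>R zz i" "level u S0 i > 0" by auto
qed

lemma zz_prim: assumes "s \<ge> 0" "s *\<^sub>R zz i \<in> lat" shows "\<exists>n::nat. s = real n"
proof -
  have "(s * qq i) *\<^sub>R hh i \<in> lat" using assms by (simp add: zz_def)
  moreover have "s * qq i \<ge> 0" using assms qq_props(1)[of i] by simp
  ultimately obtain n :: nat where "s * qq i = real n * qq i" using qq_props(3) by blast
  then have "s = real n" using qq_props(1)[of i] by simp
  then show ?thesis by blast
qed

lemma gcd_one: "\<exists>m\<in>lat. m \<bullet> zz i = 1"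
proof -
  define I where "I = {a::int. \<exists>m\<in>lat. m \<bullet> zz i = of_int a}"
  have Idiff: "a \<in> I \<Longrightarrow> b \<in> I \<Longrightarrow> a - k * b \<in> I" for a b k
  proof -
    assume "a \<in> I" "b \<in> I"
    then obtain ma mb where "ma \<in> lat" "ma \<bullet> zz i = of_int a" "mb \<in> lat" "mb \<bullet> zz i = of_int b"
      unfolding I_def by blast
    then have "ma - of_int k *\<^sub>R mb \<in> lat" "(ma - of_int k *\<^sub>R mb) \<bullet> zz i = of_int (a - k * b)"
      by (auto intro!: lat_diff lat_scale simp: inner_diff_left)
    then show ?thesis unfolding I_def by blast
  qed
  have coordI: "\<exists>a. a \<in> I \<and> zz i $ j = of_int a" for j
  proof -
    obtain a where a: "zz i $ j = of_int a" using zz_lat[of i] unfolding lat_def by (auto elim: Ints_cases)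
    have "axis j 1 \<bullet> zz i = zz i $ j" by (simp add: inner_axis')
    then have "a \<in> I" unfolding I_def using axis_lat a by auto
    with a show ?thesis by blast
  qed
  obtain j where j: "zz i $ j \<noteq> 0" using zz_nonzero[of i] by (metis vec_eq_iff zero_index)
  obtain a where a: "a \<in> I" "zz i $ j = of_int a" using coordI by blast
  have "\<bar>a\<bar> \<in> I"
  proof (cases "a \<ge> 0")
    case True then show ?thesis using a by simp
  next
    case False
    have "a - 2 * a \<in> I" using Idiff[OF a(1) a(1)] .
    then show ?thesis using False by simp
  qed
  moreover have "\<bar>a\<bar> > 0" using a j by auto
  ultimately have ex: "\<exists>n::nat. n > 0 \<and> int n \<in> I" by (intro exI[of _ "nat \<bar>a\<bar>"]) auto
  define G where "G = (LEAST n::nat. n > 0 \<and> int n \<in> I)"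
  have G: "G > 0 \<and> int G \<in> I" unfolding G_def by (rule LeastI_ex[OF ex])
  have Gmin: "n > 0 \<Longrightarrow> int n \<in> I \<Longrightarrow> G \<le> n" for n unfolding G_def by (rule Least_le) auto
  have Gdvd: "int G dvd b" if "b \<in> I" for b
  proof -
    have "b - (b div int G) * int G \<in> I" using Idiff that G by blast
    moreover have "b - (b div int G) * int G = b mod int G" by (simp add: mod_div_mult_eq minus_div_mult_eq_mod)
    ultimately have bm: "b mod int G \<in> I" by simp
    have "b mod int G \<ge> 0" "b mod int G < int G" using G by auto
    then obtain n :: nat where n: "int n = b mod int G" "n < G" by (metis nonneg_int_cases of_nat_less_iff)
    have "n = 0"
    proof (rule ccontr)
      assume "n \<noteq> 0"
      then have "G \<le> n" using Gmin bm n by auto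
      with n show False by simp
    qed
    then show ?thesis using n by (simp add: dvd_eq_mod_eq_0)
  qed
  have "(1 / real G) *\<^sub>R zz i \<in> lat"
    unfolding lat_def
  proof (intro CollectI allI)
    fix j'
    obtain a' where a': "a' \<in> I" "zz i $ j' = of_int a'" using coordI by blast
    obtain e where "a' = int G * e" using Gdvd[OF a'(1)] by (auto elim: dvdE)
    then have "((1 / real G) *\<^sub>R zz i) $ j' = of_int e" using a' G by simp
    then show "((1 / real G) *\<^sub>R zz i) $ j' \<in> \<int>" by simp
  qed
  then obtain n :: nat where "1 / real G = real n" using zz_prim[of "1 / real G" i] by auto
  then have "real n * real G = 1" using G by (simp add: field_simps)
  then have "n * G = 1" by (metis of_nat_1 of_nat_eq_iff of_nat_mult)
  then have "G = 1" by simp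
  then show ?thesis using G unfolding I_def by auto
qed

end


context ctx begin

abbreviation "lev i \<equiv> level u S0 i"

lemma zz_hh: "zz i = (1 / real (lev i)) *\<^sub>R hh i"
  using level_eq[of i] by simp

lemma P_zz: "m \<in> PP \<Longrightarrow> m \<bullet> zz i \<ge> 0"
  using P_iff[of m] level_eq(2)[of i] by (simp add: zz_hh)

lemma P_zz_nat: "m \<in> PP \<Longrightarrow> \<exists>n::nat. m \<bullet> zz i = real n"
  using P_zz[of m i] P_iff[of m] lat_inner[OF _ zz_lat] Ints_nonneg_nat by blast

lemma hh_lev: "m \<bullet> hh i = real (lev i) * (m \<bullet> zz i)"
  by (subst level_eq(1)) simp

lemma m_exists: "\<exists>m\<in>PP. m \<bullet> zz i = 1"
proof -
  obtain m0 where m0: "m0 \<in> lat" "m0 \<bullet> zz i = 1" using gcd_one by blast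
  define K :: nat where "K = nat \<lceil>\<Sum>j\<in>UNIV. \<bar>m0 \<bullet> hh j\<bar>\<rceil>"
  have Kge: "real K \<ge> \<bar>m0 \<bullet> hh j\<bar>" for j
  proof -
    have "\<bar>m0 \<bullet> hh j\<bar> \<le> (\<Sum>j\<in>UNIV. \<bar>m0 \<bullet> hh j\<bar>)" by (rule member_le_sum) auto
    also have "\<dots> \<le> real K" unfolding K_def by linarith
    finally show ?thesis .
  qed
  define qv where "qv = (\<Sum>j\<in>UNIV. (if j = i then 0 else real DD) *\<^sub>R ww j)"
  have qvh: "qv \<bullet> hh j = (if j = i then 0 else real DD)" for j unfolding qv_def by (rule coef2)
  have qvlat: "qv \<in> lat"
  proof -
    have "qv $ k = (\<Sum>j\<in>UNIV. if j = i then 0 else real DD * ww j $ k)" for k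
      unfolding qv_def sum_component by (intro sum.cong) auto
    then show ?thesis unfolding lat_def using DD_ww by (auto intro!: Ints_sum)
  qed
  define m where "m = m0 + real K *\<^sub>R qv"
  have mlat: "m \<in> lat" unfolding m_def by (intro lat_add m0 lat_scale qvlat) simp
  have mh: "m \<bullet> hh j = m0 \<bullet> hh j + real K * (if j = i then 0 else real DD)" for j
    by (simp add: m_def inner_add_left qvh)
  have "m \<bullet> hh j \<ge> 0" for j
  proof (cases "j = i")
    case True
    then show ?thesis using mh[of j] hh_lev[of m0 i] m0(2) by simp
  next
    case False
    have "real DD \<ge> 1" using DD_pos by simp
    then have "real K * real DD \<ge> real K" by (simp add: mult_le_cancel_left1)
    then show ?thesis using mh[of j] False Kge[of j] by simp
  qed
  then have "m \<in> PP" using mlat P_iff by blast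
  moreover have "m \<bullet> zz i = 1"
  proof -
    have "qv \<bullet> zz i = 0" using qvh[of i] by (simp add: zz_hh)
    then show ?thesis using m0 by (simp add: m_def inner_add_left)
  qed
  ultimately show ?thesis by blast
qed

lemma r_hom: "mon_hom_on PP r" "inj_on r PP" "close_image PP r"
  using mfr unfolding minimal_free_resolution_def by auto

lemma r_zero: "r 0 = (\<lambda>_. 0)" using r_hom(1) unfolding mon_hom_on_def by blast
lemma r_add: "m \<in> PP \<Longrightarrow> m' \<in> PP \<Longrightarrow> r (m + m') = (\<lambda>i. r m i + r m' i)"
  using r_hom(1) unfolding mon_hom_on_def by blast

lemma P_scale: "m \<in> PP \<Longrightarrow> real n *\<^sub>R m \<in> PP"
  by (rule closed_nat_scale[OF P_zero P_add])

lemma r_scale: "m \<in> PP \<Longrightarrow> r (real n *\<^sub>R m) = (\<lambda>i. n * r m i)"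
proof (induction n)
  case 0 then show ?case by (simp add: r_zero)
next
  case (Suc n)
  have "real (Suc n) *\<^sub>R m = m + real n *\<^sub>R m" by (simp add: algebra_simps)
  then show ?case using Suc r_add[OF Suc.prems P_scale[OF Suc.prems]] by simp
qed

lemma r_comb: assumes "\<And>i. p i \<in> PP"
  shows "r (\<Sum>i\<in>F. real (c i) *\<^sub>R p i) = (\<lambda>j. \<Sum>i\<in>F. c i * r (p i) j)"
proof (induction F rule: infinite_finite_induct)
  case (infinite A) then show ?case by (simp add: r_zero)
next
  case empty then show ?case by (simp add: r_zero)
next
  case (insert x F)
  have "(\<Sum>i\<in>F. real (c i) *\<^sub>R p i) \<in> PP"
    by (rule closed_nat_comb[OF P_zero P_add]) (use assms in auto)
  then show ?case using insert r_add[OF P_scale[OF assms]] r_scale[OF assms] by simp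
qed

lemma r_E: assumes m: "m \<in> PP"
  shows "real DD * real (r m i) = (\<Sum>j\<in>UNIV. (m \<bullet> hh j) * real (r (pp j) i))"
proof -
  obtain cm where cm: "\<And>j. m \<bullet> hh j = real (cm j)" using P_nat[OF m] by metis
  have "real DD *\<^sub>R m = (\<Sum>j\<in>UNIV. real (cm j) *\<^sub>R pp j)" using P_expand[of m] cm by simp
  then have "r (real DD *\<^sub>R m) = (\<lambda>i. \<Sum>j\<in>UNIV. cm j * r (pp j) i)" using r_comb[OF pp_P] by simp
  then have "DD * r m i = (\<Sum>j\<in>UNIV. cm j * r (pp j) i)" using r_scale[OF m] by metis
  then have "real (DD * r m i) = real (\<Sum>j\<in>UNIV. cm j * r (pp j) i)" by simp
  then show ?thesis by (simp add: cm)
qed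

end


context ctx begin

lemma close_unit: "\<exists>k m. k > 0 \<and> m \<in> PP \<and> r m = (\<lambda>j. k * unitv i j)"
  using r_hom(3) unfolding close_image_def by blast

definition mi where "mi i = (SOME m. \<exists>k. k > 0 \<and> m \<in> PP \<and> r m = (\<lambda>j. k * unitv i j))"
definition ki where "ki i = (SOME k. k > 0 \<and> mi i \<in> PP \<and> r (mi i) = (\<lambda>j. k * unitv i j))"

lemma mi_props: "ki i > 0" "mi i \<in> PP" "r (mi i) = (\<lambda>j. ki i * unitv i j)"
proof -
  have "\<exists>k. k > 0 \<and> mi i \<in> PP \<and> r (mi i) = (\<lambda>j. k * unitv i j)"
    unfolding mi_def by (rule someI_ex) (use close_unit in blast)
  then have "ki i > 0 \<and> mi i \<in> PP \<and> r (mi i) = (\<lambda>j. ki i * unitv i j)"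
    unfolding ki_def by (rule someI_ex)
  then show "ki i > 0" "mi i \<in> PP" "r (mi i) = (\<lambda>j. ki i * unitv i j)" by auto
qed

lemma r_mi: "r (mi i) j = (if j = i then ki i else 0)"
  using mi_props(3)[of i] by (simp add: unitv_def)

lemma pp_nonzero: "pp i \<noteq> 0" using pp_hh[of i i] DD_pos by auto

lemma rpp_nonzero: "\<exists>j. r (pp i) j \<noteq> 0"
proof (rule ccontr)
  assume "\<not> ?thesis"
  then have "r (pp i) = r 0" by (auto simp: r_zero)
  then have "pp i = 0" using r_hom(2) pp_P P_zero by (auto dest: inj_onD)
  then show False using pp_nonzero by blast
qed

lemma mi_pos: "\<exists>\<rho>. mi i \<bullet> hh \<rho> > 0"
proof (rule ccontr)
  assume "\<not> ?thesis"
  then have "\<forall>\<rho>. mi i \<bullet> hh \<rho> = 0" using P_iff mi_props(2)[of i] by (meson not_less order_antisym)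
  then have "mi i = 0" by (subst expand2) simp
  then have "r (mi i) i = 0" by (simp add: r_zero)
  then show False using r_mi[of i i] mi_props(1)[of i] by simp
qed

lemma key: assumes "mi i \<bullet> hh \<rho> > 0" "j \<noteq> i" shows "r (pp \<rho>) j = 0"
proof -
  have "real DD * real (r (mi i) j) = 0" using r_mi assms(2) by simp
  then have s: "(\<Sum>\<rho>'\<in>UNIV. (mi i \<bullet> hh \<rho>') * real (r (pp \<rho>') j)) = 0" using r_E[OF mi_props(2)] by simp
  have nn: "\<And>\<rho>'. \<rho>' \<in> UNIV \<Longrightarrow> 0 \<le> (mi i \<bullet> hh \<rho>') * real (r (pp \<rho>') j)"
    using P_iff[of "mi i"] mi_props(2)[of i] by simp
  have "\<forall>x\<in>UNIV. (mi i \<bullet> hh x) * real (r (pp x) j) = 0"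
    using sum_nonneg_eq_0_iff[of UNIV "\<lambda>x. (mi i \<bullet> hh x) * real (r (pp x) j)"] nn s by simp
  then have "(mi i \<bullet> hh \<rho>) * real (r (pp \<rho>) j) = 0" by blast
  then show ?thesis using assms(1) by simp
qed

definition aa where "aa i = (SOME \<rho>. mi i \<bullet> hh \<rho> > 0)"

lemma aa_pos: "mi i \<bullet> hh (aa i) > 0" unfolding aa_def by (rule someI_ex) (rule mi_pos)

lemma supp_unique: assumes "mi i \<bullet> hh \<rho> > 0" "mi i' \<bullet> hh \<rho> > 0" shows "i = i'"
proof (rule ccontr)
  assume ne: "i \<noteq> i'"
  have "r (pp \<rho>) j = 0" for j
  proof (cases "j = i")
    case True then show ?thesis using key[OF assms(2)] ne by simp
  next
    case False then show ?thesis using key[OF assms(1)] by simp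
  qed
  then have "r (pp \<rho>) = (\<lambda>_. 0)" by auto
  then show False using rpp_nonzero[of \<rho>] by simp
qed

lemma aa_inj: "inj aa"
proof (rule injI)
  fix i i' assume "aa i = aa i'"
  then show "i = i'" using supp_unique[OF aa_pos[of i]] aa_pos[of i'] by simp
qed
lemma aa_surj: "surj aa" using aa_inj finite_UNIV_inj_surj[of aa] by simp
lemma aa_bij: "bij aa" using aa_inj aa_surj by (simp add: bij_def)

lemma mi_supp: "mi i \<bullet> hh \<rho> > 0 \<Longrightarrow> \<rho> = aa i"
proof -
  assume a: "mi i \<bullet> hh \<rho> > 0"
  obtain i' where i': "\<rho> = aa i'" using aa_surj by (metis surj_f_inv_f)
  have "i = i'" using supp_unique[OF a] aa_pos[of i'] i' by simp
  then show ?thesis using i' by simp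
qed

lemma rpp_aa: "j \<noteq> i \<Longrightarrow> r (pp (aa i)) j = 0" using key[OF aa_pos] by blast

lemma rpp_aa_pos: "r (pp (aa i)) i > 0"
proof -
  obtain j where "r (pp (aa i)) j \<noteq> 0" using rpp_nonzero[of "aa i"] by blast
  then show ?thesis using rpp_aa[of j i] by (cases "j = i") auto
qed

definition beta where "beta i = real (r (pp (aa i)) i) / real DD"

lemma beta_pos: "beta i > 0" unfolding beta_def using rpp_aa_pos DD_pos by simp

lemma r_form1: assumes m: "m \<in> PP" shows "real (r m i) = (m \<bullet> hh (aa i)) * beta i"
proof -
  have "real DD * real (r m i) = (\<Sum>j\<in>UNIV. (m \<bullet> hh j) * real (r (pp j) i))" by (rule r_E[OF m])
  also have "\<dots> = (\<Sum>j\<in>UNIV. if j = aa i then (m \<bullet> hh (aa i)) * real (r (pp (aa i)) i) else 0)"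
  proof (intro sum.cong refl)
    fix j :: 'n
    show "(m \<bullet> hh j) * real (r (pp j) i) = (if j = aa i then (m \<bullet> hh (aa i)) * real (r (pp (aa i)) i) else 0)"
    proof (cases "j = aa i")
      case False
      obtain i' where j: "j = aa i'" using aa_surj by (metis surj_f_inv_f)
      with False have "i' \<noteq> i" by auto
      then have "r (pp j) i = 0" using rpp_aa j by auto
      then show ?thesis using False by simp
    qed simp
  qed
  also have "\<dots> = (m \<bullet> hh (aa i)) * real (r (pp (aa i)) i)" by simp
  finally show ?thesis unfolding beta_def using DD_pos by (simp add: field_simps)
qed

lemma assoc_eq: "assoc_ray u r i = aa i"
  unfolding assoc_ray_def prim_eq
proof (rule the_equality)
  show "\<forall>m\<in>PP. \<forall>k::nat. k > 0 \<longrightarrow> r m = (\<lambda>j. k * unitv i j) \<longrightarrow> m \<bullet> zz (aa i) > 0"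
  proof (intro ballI allI impI)
    fix m k assume m: "m \<in> PP" and k: "(k::nat) > 0" "r m = (\<lambda>j. k * unitv i j)"
    then have "real (r m i) > 0" by (simp add: unitv_def)
    then have "(m \<bullet> hh (aa i)) * beta i > 0" using r_form1[OF m] by simp
    then have "m \<bullet> hh (aa i) > 0" using beta_pos[of i] by (simp add: zero_less_mult_iff)
    then show "m \<bullet> zz (aa i) > 0" using hh_lev[of m "aa i"] level_eq(2)[of "aa i"]
      by (simp add: zero_less_mult_iff)
  qed
next
  fix \<rho> assume a: "\<forall>m\<in>PP. \<forall>k::nat. k > 0 \<longrightarrow> r m = (\<lambda>j. k * unitv i j) \<longrightarrow> m \<bullet> zz \<rho> > 0"
  then have "mi i \<bullet> zz \<rho> > 0" using mi_props by blast
  then have "mi i \<bullet> hh \<rho> > 0" using hh_lev[of "mi i" \<rho>] level_eq(2)[of \<rho>] by simp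
  then show "\<rho> = aa i" by (rule mi_supp)
qed

definition delta where "delta i = real (lev (aa i)) * beta i"

lemma delta_pos: "delta i > 0" unfolding delta_def using beta_pos level_eq(2) by simp

lemma r_form2: "m \<in> PP \<Longrightarrow> real (r m i) = (m \<bullet> zz (aa i)) * delta i"
  using r_form1[of m i] hh_lev[of m "aa i"] by (simp add: delta_def)

lemma delta_ge1: "delta i \<ge> 1"
proof -
  obtain m where m: "m \<in> PP" "m \<bullet> zz (aa i) = 1" using m_exists by blast
  then have "real (r m i) = delta i" using r_form2 by simp
  moreover have "r m i \<noteq> 0" using delta_pos[of i] calculation by auto
  ultimately show ?thesis by (metis of_nat_1 of_nat_mono less_one not_le)
qed

end


context ctx begin

definition j0 where "j0 m = (\<lambda>i. nat \<lfloor>m \<bullet> zz (aa i)\<rfloor>)"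

lemma j0_real: "m \<in> PP \<Longrightarrow> real (j0 m i) = m \<bullet> zz (aa i)"
proof -
  assume m: "m \<in> PP"
  obtain n :: nat where "m \<bullet> zz (aa i) = real n" using P_zz_nat[OF m] by blast
  then show ?thesis by (simp add: j0_def)
qed

lemma j0_hom: "mon_hom_on PP j0"
  unfolding mon_hom_on_def
proof (intro conjI ballI)
  show "j0 0 = (\<lambda>_. 0)" by (simp add: j0_def)
  fix a b assume ab: "a \<in> PP" "b \<in> PP"
  show "j0 (a + b) = (\<lambda>i. j0 a i + j0 b i)"
  proof
    fix i
    have "real (j0 (a + b) i) = real (j0 a i + j0 b i)"
      using j0_real[OF P_add[OF ab]] j0_real[OF ab(1)] j0_real[OF ab(2)] by (simp add: inner_add_left)
    then show "j0 (a + b) i = j0 a i + j0 b i" by (simp only: of_nat_eq_iff)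
  qed
qed

lemma j0_inj: "inj_on j0 PP"
proof (rule inj_onI)
  fix m m' assume m: "m \<in> PP" "m' \<in> PP" "j0 m = j0 m'"
  have "m \<bullet> zz (aa i) = m' \<bullet> zz (aa i)" for i using j0_real[OF m(1)] j0_real[OF m(2)] m(3) by metis
  then have h: "m \<bullet> hh \<rho> = m' \<bullet> hh \<rho>" for \<rho>
    using hh_lev aa_surj by (metis surj_f_inv_f)
  have "m = (\<Sum>i\<in>UNIV. (m \<bullet> hh i) *\<^sub>R ww i)" by (rule expand2)
  also have "\<dots> = (\<Sum>i\<in>UNIV. (m' \<bullet> hh i) *\<^sub>R ww i)" using h by simp
  also have "\<dots> = m'" by (rule expand2[symmetric])
  finally show "m = m'" .
qed

lemma pp_comb_h: "(\<Sum>i\<in>UNIV. c i *\<^sub>R pp (aa i)) \<bullet> hh (aa i0) = c i0 * real DD"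
proof -
  have "(\<Sum>i\<in>UNIV. c i *\<^sub>R pp (aa i)) \<bullet> hh (aa i0) = (\<Sum>i\<in>UNIV. if i = i0 then c i0 * real DD else 0)"
    unfolding inner_sum_left
  proof (intro sum.cong refl)
    fix i show "(c i *\<^sub>R pp (aa i)) \<bullet> hh (aa i0) = (if i = i0 then c i0 * real DD else 0)"
      using aa_inj by (auto simp: pp_hh dest: injD)
  qed
  also have "\<dots> = c i0 * real DD" by simp
  finally show ?thesis .
qed

lemma j0_close: "close_image PP j0"
  unfolding close_image_def
proof
  fix x :: "'n \<Rightarrow> nat"
  define m where "m = (\<Sum>i\<in>UNIV. real (lev (aa i) * x i) *\<^sub>R pp (aa i))"
  have mh: "m \<bullet> hh (aa i0) = real (lev (aa i0) * x i0) * real DD" for i0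
    unfolding m_def by (rule pp_comb_h)
  have "m \<in> lat" unfolding m_def by (intro lat_sum lat_scale pp_lat) simp
  moreover have "m \<bullet> hh \<rho> \<ge> 0" for \<rho>
  proof -
    obtain i0 where "\<rho> = aa i0" using aa_surj by (metis surj_f_inv_f)
    then show ?thesis using mh[of i0] by simp
  qed
  ultimately have mP: "m \<in> PP" using P_iff by blast
  have "j0 m = (\<lambda>i. DD * x i)"
  proof
    fix i
    have "real (j0 m i) = m \<bullet> zz (aa i)" by (rule j0_real[OF mP])
    also have "\<dots> = real (DD * x i)" using mh[of i] hh_lev[of m "aa i"] level_eq(2)[of "aa i"] by simp
    finally show "j0 m i = DD * x i" by (simp only: of_nat_eq_iff)
  qed
  then show "\<exists>k>0. \<exists>m\<in>PP. j0 m = (\<lambda>i. k * x i)" using DD_pos mP by blast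
qed

lemma nat_hom_scale: "nat_hom \<phi> \<Longrightarrow> \<phi> (\<lambda>j. k * x j) = (\<lambda>j. k * \<phi> x j)"
proof (induction k)
  case 0 then show ?case by (simp add: nat_hom_def)
next
  case (Suc k)
  have "(\<lambda>j. Suc k * x j) = (\<lambda>j. x j + k * x j)" by simp
  then have "\<phi> (\<lambda>j. Suc k * x j) = (\<lambda>j. \<phi> x j + \<phi> (\<lambda>j. k * x j) j)"
    using Suc.prems unfolding nat_hom_def by metis
  then show ?case using Suc by simp
qed

lemma delta_one: "delta i = 1"
proof -
  obtain \<phi> where \<phi>: "nat_hom \<phi>" "\<forall>m\<in>PP. j0 m = \<phi> (r m)"
    using mfr j0_hom j0_inj j0_close unfolding minimal_free_resolution_def by blast
  have "j0 (mi i) = \<phi> (\<lambda>j. ki i * unitv i j)" using \<phi>(2) mi_props by simp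
  also have "\<dots> = (\<lambda>j. ki i * \<phi> (unitv i) j)" by (rule nat_hom_scale[OF \<phi>(1)])
  finally have "real (j0 (mi i) i) = real (ki i) * real (\<phi> (unitv i) i)" by simp
  then have e1: "mi i \<bullet> zz (aa i) = real (ki i) * real (\<phi> (unitv i) i)" using j0_real[OF mi_props(2)] by simp
  have "real (ki i) = (mi i \<bullet> zz (aa i)) * delta i"
    using r_form2[of "mi i" i, OF mi_props(2)] unfolding r_mi[of i i, simplified] .
  then have "real (ki i) * 1 = real (ki i) * (real (\<phi> (unitv i) i) * delta i)" using e1 by simp
  then have e2: "real (\<phi> (unitv i) i) * delta i = 1" using mi_props(1)[of i] by simp
  then have "\<phi> (unitv i) i \<noteq> 0" by (metis mult_eq_0_iff of_nat_0 zero_neq_one)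
  then have "real (\<phi> (unitv i) i) \<ge> 1" by simp
  moreover have "delta i \<ge> 1" by (rule delta_ge1)
  ultimately show ?thesis using e2 by (smt (verit) mult_le_cancel_right1 mult_nonneg_nonneg)
qed

lemma r_final: "m \<in> PP \<Longrightarrow> real (r m i) = m \<bullet> zz (aa i)"
  using r_form2[of m i] delta_one by simp

lemma reidx: "(\<Sum>i\<in>UNIV. (m \<bullet> hh (aa i)) *\<^sub>R ww (aa i)) = m"
proof -
  have "(\<Sum>i\<in>UNIV. (m \<bullet> hh (aa i)) *\<^sub>R ww (aa i)) = (\<Sum>\<rho>\<in>aa ` UNIV. (m \<bullet> hh \<rho>) *\<^sub>R ww \<rho>)"
    by (simp add: sum.reindex[OF aa_inj])
  also have "\<dots> = (\<Sum>\<rho>\<in>UNIV. (m \<bullet> hh \<rho>) *\<^sub>R ww \<rho>)" using aa_surj by simp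
  also have "\<dots> = m" by (rule expand2[symmetric])
  finally show ?thesis .
qed

definition Phi :: "('n \<Rightarrow> nat) \<Rightarrow> real^'n" where
  "Phi x = (\<Sum>i\<in>UNIV. real (x i) *\<^sub>R ww (aa i))"

lemma Phi_h: "Phi x \<bullet> hh (aa j) = real (x j)"
proof -
  have "Phi x \<bullet> hh (aa j) = (\<Sum>i\<in>UNIV. if i = j then real (x j) else 0)"
    unfolding Phi_def inner_sum_left
  proof (intro sum.cong refl)
    fix i show "(real (x i) *\<^sub>R ww (aa i)) \<bullet> hh (aa j) = (if i = j then real (x j) else 0)"
      using aa_inj by (auto simp: wh dest: injD)
  qed
  then show ?thesis by simp
qed

lemma Phi_h_nat: "Phi x \<bullet> hh \<rho> \<in> \<nat>"
proof -
  obtain j where "\<rho> = aa j" using aa_surj by (metis surj_f_inv_f)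
  then show ?thesis using Phi_h by simp
qed

lemma main:
  "Phi (\<lambda>_. 0) = 0 \<and> (\<forall>x y. Phi (\<lambda>i. x i + y i) = Phi x + Phi y) \<and>
   bij_betw Phi UNIV (target S0) \<and> (\<forall>m \<in> PP. Phi (stacky_resolution u S0 r m) = m)"
proof (intro conjI allI ballI)
  show "Phi (\<lambda>_. 0) = 0" by (simp add: Phi_def)
  fix x y :: "'n \<Rightarrow> nat"
  show "Phi (\<lambda>i. x i + y i) = Phi x + Phi y" by (simp add: Phi_def scaleR_add_left sum.distrib)
next
  fix m assume m: "m \<in> PP"
  have "Phi (stacky_resolution u S0 r m) = (\<Sum>i\<in>UNIV. (m \<bullet> hh (aa i)) *\<^sub>R ww (aa i))"
    unfolding Phi_def stacky_resolution_def assoc_eq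
  proof (intro sum.cong refl)
    fix i
    have "real (lev (aa i) * r m i) = m \<bullet> hh (aa i)" using r_final[OF m] hh_lev by simp
    then show "real (lev (aa i) * r m i) *\<^sub>R ww (aa i) = (m \<bullet> hh (aa i)) *\<^sub>R ww (aa i)" by simp
  qed
  also have "\<dots> = m" by (rule reidx)
  finally show "Phi (stacky_resolution u S0 r m) = m" .
next
  show "bij_betw Phi UNIV (target S0)"
    unfolding bij_betw_def
  proof (intro conjI)
    show "inj Phi"
    proof (rule injI)
      fix x y assume "Phi x = Phi y"
      then have "real (x j) = real (y j)" for j using Phi_h[of x j] Phi_h[of y j] by simp
      then show "x = y" by (simp add: fun_eq_iff)
    qed
    show "Phi ` UNIV = target S0"
    proof (intro set_eqI iffI)
      fix m assume "m \<in> Phi ` UNIV"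
      then obtain x where x: "m = Phi x" by blast
      have "m $ k \<in> \<rat>" for k
      proof -
        have "m $ k = (\<Sum>i\<in>UNIV. real (x i) * ww (aa i) $ k)" unfolding x Phi_def sum_component by simp
        also have "\<dots> \<in> \<rat>" by (intro Rats_sum Rats_mult Rats_of_nat ww_rat)
        finally show ?thesis .
      qed
      moreover have "m \<bullet> v \<in> \<nat>" if vS: "v \<in> S0" for v
      proof -
        obtain c where c: "v = (\<Sum>i\<in>UNIV. real (c i) *\<^sub>R hh i)" using S0_eq[THEN iffD1, OF vS] by blast
        have "m \<bullet> v = (\<Sum>i\<in>UNIV. real (c i) * (Phi x \<bullet> hh i))" unfolding c x by (simp add: inner_sum_right)
        also have "\<dots> \<in> \<nat>"
        proof -
          have "\<exists>n::nat. Phi x \<bullet> hh i = real n" for i using Phi_h_nat[of x i] by (auto elim: Nats_cases)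
          then obtain ns where ns: "\<And>i. Phi x \<bullet> hh i = real (ns i)" by metis
          have "(\<Sum>i\<in>UNIV. real (c i) * (Phi x \<bullet> hh i)) = real (\<Sum>i\<in>UNIV. c i * ns i)" by (simp add: ns)
          then show ?thesis by (simp only: of_nat_in_Nats)
        qed
        finally show ?thesis .
      qed
      ultimately show "m \<in> target S0" unfolding target_def by simp
    next
      fix m assume m: "m \<in> target S0"
      have "m \<bullet> hh (aa i) \<in> \<nat>" for i using m hh_props(1)[of "aa i"] unfolding target_def by blast
      then have "\<forall>i. \<exists>n::nat. m \<bullet> hh (aa i) = real n" by (metis Nats_cases)
      then obtain x where x: "\<And>i. m \<bullet> hh (aa i) = real (x i)" by metis
      have "Phi x = (\<Sum>i\<in>UNIV. (m \<bullet> hh (aa i)) *\<^sub>R ww (aa i))" unfolding Phi_def x ..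
      also have "\<dots> = m" by (rule reidx)
      finally show "m \<in> Phi ` UNIV" by (metis rangeI)
    qed
  qed
qed

end

theorem lemma3p3:
  fixes u :: "'n::finite \<Rightarrow> real^'n" and S0 :: "(real^'n) set"
    and r :: "real^'n \<Rightarrow> ('n \<Rightarrow> nat)"
  assumes "inj u" and "independent (range u)"
    and "stacky_simplex u S0"
    and "minimal_free_resolution (dual_monoid u) r"
  shows "\<exists>\<phi> :: ('n \<Rightarrow> nat) \<Rightarrow> real^'n.
           \<phi> (\<lambda>_. 0) = 0 \<and> (\<forall>x y. \<phi> (\<lambda>i. x i + y i) = \<phi> x + \<phi> y) \<and>
           bij_betw \<phi> UNIV (target S0) \<and>
           (\<forall>m \<in> dual_monoid u. \<phi> (stacky_resolution u S0 r m) = m)"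
proof -
  interpret c: ctx u S0 r by unfold_locales (fact assms)+
  show ?thesis using c.main by blast
qed

end
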